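(* Let $a\in\mathbb Z$ and let $z\ne1$ be a root of unity. Then the sequence $(\mathrm{Li}^\star_{(z)}(s)_{\ge N})_{N\ge2}$ of germs at $a$ has a complete asymptotic expansion relative to $\mathcal E$ with coefficients in $\mathcal C_{(z)}$, and its formal complete asymptotic expansion is equal to zero.
   Context: $\mathrm{Li}^\star_{(z)}(s)_{\ge N}:=\sum_{n\ge N}\frac{z^n}{n^s}$ (for $z\ne1$ a root of unity this extends to an entire function of $s$; its germ at $a$ is meant). $\mathcal E$ is the comparison scale of sequences $((\log n)^ln^{-m})_{n\ge1}$, $l\in\mathbb N$, $m\in\mathbb Z$. For a tuple $\mathbf z$ of roots of unity, $\mathcal C_{\mathbf z}$ is the $\mathbb C$-algebra of sequences generated by $(1)_{n\ge1}$ and $(z_i^n)_{n\ge1}$; it has the basis $\mathcal B_{\mathbf z}$ of sequences $(\xi^n)_{n\ge1}$, $\xi$ running over the distinct values of monomials in the $z_i$. Asymptotic expansions of germs: let $\mathbf a\in\mathbb C^r$ and $\mathcal O_{\mathbf a}$ the germs of holomorphic functions at $\mathbf a$. For $f_n\in\mathcal O_{\mathbf a}$ write $f_n=\sum_{\mathbf k\in\mathbb N^r}c_{\mathbf k}(f_n)(\mathbf s-\mathbf a)^{\mathbf k}$. For $A\in\mathbb Z$, $(f_n)$ has an asymptotic expansion to precision $n^{-A}$ relative to $\mathcal E$ with coefficients in $\mathcal C_{\mathbf z}$ if: (a) for each $\mathbf k$ there are sequences $u_{(\mathbf k,l,m)}\in\mathcal C_{\mathbf z}$ ($l\in\mathbb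 N$, $m\in\mathbb Z$, $m\le A$), zero for all but finitely many $(l,m)$, with $c_{\mathbf k}(f_n)=\sum_{m\le A}\sum_lu_{(\mathbf k,l,m)}(n)(\log n)^ln^{-m}+O(n^{-A})$ as $n\to\infty$; (b) there is $m_0\in\mathbb Z$ with $u_{(\mathbf k,l,m)}=0$ for all $\mathbf k,l$ and all $m\le m_0$; (c) for each $(l,m)$, letting $u_{(\mathbf k,l,m)}$ also denote the coordinate of the sequence $u_{(\mathbf k,l,m)}$ along the constant sequence in the basis $\mathcal B_{\mathbf z}$, the series $g_{(l,m)}:=\sum_{\mathbf k}u_{(\mathbf k,l,m)}(\mathbf s-\mathbf a)^{\mathbf k}$ converges near $\mathbf a$. The formal expansion to precision $n^{-A}$ is $\sum_{m\le A}g_{(l,m)}L^lX^m$. $(f_n)$ has a complete asymptotic expansion if this holds for all $A\in\mathbb Z$; then there is a unique $G=\sum_{(l,m)}g_{(l,m)}L^lX^m\in\mathcal O_{\mathbf a}[[L]]((X))$ whose truncations to $X$-degree $\le A$ are the formal expansions to precision $n^{-A}$; $G$ is the formal complete asymptotic expansion. For germs of meromorphic functions $f_n$, these notions are defined by requiring them for $(ff_n)$ for some nonzero $f\in\mathcal O_{\mathbf a}$ with $ff_n\in\mathcal O_{\mathbf a}$ for all $n$ (independent of $f$), the formal complete expansion being $\sum f^{-1}g_{(l,m)}L^lX^m$ where $\sum g_{(l,m)}L^lX^m$ is that of $(ff_n)$. *)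

theory Defs
  imports "HOL-Analysis.Analysis" "HOL-Library.Landau_Symbols"
begin

definition Li_star :: "complex \<Rightarrow> nat \<Rightarrow> complex \<Rightarrow> complex" where
  "Li_star z N = (THE f. f holomorphic_on UNIV \<and>
      (\<forall>s. 1 < Re s \<longrightarrow> f s = (\<Sum>i. z ^ (i + N) / (of_nat (i + N)) powr s)))"

definition taylor_coeff :: "(complex \<Rightarrow> complex) \<Rightarrow> complex \<Rightarrow> nat \<Rightarrow> complex" where
  "taylor_coeff f a k = (deriv ^^ k) f a / fact k"

definition mono_vals :: "complex list \<Rightarrow> complex set" where
  "mono_vals zs = {(\<Prod>i<length zs. (zs ! i) ^ (e i)) | e. True}"

definition seq_alg :: "complex list \<Rightarrow> (nat \<Rightarrow> complex) set" where
  "seq_alg zs = {u. \<exists>c. \<forall>n\<ge>1. u n = (\<Sum>\<xi>\<in>mono_vals zs. c \<xi> * \<xi> ^ n)}"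

text \<open>Coordinate of a sequence of C_zs along the constant sequence 1.\<close>
definition const_coord :: "complex list \<Rightarrow> (nat \<Rightarrow> complex) \<Rightarrow> complex" where
  "const_coord zs u = (THE c1. \<exists>c. (\<forall>n\<ge>1. u n = (\<Sum>\<xi>\<in>mono_vals zs. c \<xi> * \<xi> ^ n)) \<and> c 1 = c1)"

text \<open>F n k is the k-th Taylor coefficient at a of the n-th germ.  u k l m is the coefficient
  sequence of (log n)^l n^(-m) in the expansion of the k-th Taylor coefficient.\<close>
definition asymp_exp_prec ::
  "complex list \<Rightarrow> complex \<Rightarrow> (nat \<Rightarrow> nat \<Rightarrow> complex) \<Rightarrow> int \<Rightarrow>
   (nat \<Rightarrow> nat \<Rightarrow> int \<Rightarrow> nat \<Rightarrow> complex) \<Rightarrow> bool" where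
  "asymp_exp_prec zs a F A u \<longleftrightarrow>
     (\<forall>k l m. u k l m \<in> seq_alg zs) \<and>
     (\<forall>k l m. A < m \<longrightarrow> u k l m = (\<lambda>_. 0)) \<and>
     (\<forall>k. finite {(l, m). u k l m \<noteq> (\<lambda>_. 0)}) \<and>
     (\<forall>k. (\<lambda>n. F n k - (\<Sum>(l, m)\<in>{(l, m). u k l m \<noteq> (\<lambda>_. 0)}.
              u k l m n * of_real (ln (real n) ^ l * real n powr (- real_of_int m))))
          \<in> O(\<lambda>n. of_real (real n powr (- real_of_int A)))) \<and>
     (\<exists>m0. \<forall>k l m. m \<le> m0 \<longrightarrow> u k l m = (\<lambda>_. 0)) \<and>
     (\<forall>l m. \<exists>\<epsilon>>0. \<forall>s. cmod (s - a) < \<epsilon> \<longrightarrow>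
          summable (\<lambda>k. const_coord zs (u k l m) * (s - a) ^ k))"

definition has_complete_asymp_exp ::
  "complex list \<Rightarrow> complex \<Rightarrow> (nat \<Rightarrow> nat \<Rightarrow> complex) \<Rightarrow> bool" where
  "has_complete_asymp_exp zs a F \<longleftrightarrow> (\<forall>A. \<exists>u. asymp_exp_prec zs a F A u)"

text \<open>G l m is (the Taylor coefficient sequence at a of) the germ g_(l,m), coefficient of L^l X^m.
  G is a formal complete expansion if it lies in O_a[[L]]((X)) and every truncation to
  X-degree \<le> A is a formal expansion to precision n^(-A).\<close>
definition formal_complete_exp ::
  "complex list \<Rightarrow> complex \<Rightarrow> (nat \<Rightarrow> nat \<Rightarrow> complex) \<Rightarrow> (nat \<Rightarrow> int \<Rightarrow> nat \<Rightarrow> complex) \<Rightarrow> bool" where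
  "formal_complete_exp zs a F G \<longleftrightarrow>
     (\<exists>m0. \<forall>l m. m \<le> m0 \<longrightarrow> G l m = (\<lambda>_. 0)) \<and>
     (\<forall>A. \<exists>u. asymp_exp_prec zs a F A u \<and>
        (\<forall>l m. m \<le> A \<longrightarrow> G l m = (\<lambda>k. const_coord zs (u k l m))))"

end

theory Submission
  imports Defs "HOL-Real_Asymp.Real_Asymp" "HOL-Complex_Analysis.Complex_Analysis"
begin



fun gco :: "complex \<Rightarrow> nat \<Rightarrow> complex \<Rightarrow> complex" where
 "gco z t s = (if t = 0 then 1/(1-z) else
     z/(1-z) * (\<Sum>r<t. gco z r s * ((-s - of_nat r) gchoose (t - r))))"

declare gco.simps[simp del]

lemma gchoose_holo: "(\<lambda>s::complex. (f s) gchoose k) holomorphic_on S" if "f holomorphic_on S"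
  using that unfolding gbinomial_prod_rev by (intro holomorphic_intros) auto

lemma gco_holo: "gco z t holomorphic_on S"
proof (induction t rule: less_induct)
  case (less t)
  show ?case
  proof (cases "t = 0")
    case True
    then show ?thesis by (subst gco.simps[abs_def]) simp
  next
    case False
    then have e: "gco z t = (\<lambda>s. z/(1-z) * (\<Sum>r<t. gco z r s * ((-s - of_nat r) gchoose (t - r))))"
      by (subst gco.simps[abs_def]) simp
    show ?thesis unfolding e
      apply (rule holomorphic_on_mult[OF holomorphic_on_const])
      apply (intro holomorphic_on_sum holomorphic_on_mult gchoose_holo less holomorphic_intros)
      using False by auto
  qed
qed

lemma gco_coeff_zero:
  assumes "z \<noteq> 1"
  shows "(if t = 0 then 1 else 0) - gco z t s + z * (\<Sum>r\<le>t. gco z r s * ((-s - of_nat r) gchoose (t - r))) = 0"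
proof -
  have z1: "1 - z \<noteq> 0" using assms by simp
  have split: "(\<Sum>r\<le>t. gco z r s * ((-s - of_nat r) gchoose (t - r)))
      = gco z t s + (\<Sum>r<t. gco z r s * ((-s - of_nat r) gchoose (t - r)))"
    by (simp add: lessThan_Suc_atMost[symmetric])
  show ?thesis
  proof (cases "t = 0")
    case True
    then show ?thesis using z1 by (simp add: gco.simps field_simps)
  next
    case False
    then have "gco z t s = z/(1-z) * (\<Sum>r<t. gco z r s * ((-s - of_nat r) gchoose (t - r)))"
      by (subst gco.simps) simp
    then show ?thesis using False z1 unfolding split by (simp add: field_simps)
  qed
qed

lemma double_sum_reindex:
  "(\<Sum>r<(R::nat). \<Sum>i<R-r. f r i) = (\<Sum>t<R. \<Sum>r\<le>t. f r (t - r))"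
proof -
  have "(\<Sum>r<R. \<Sum>i<R-r. f r i) = (\<Sum>(r,i)\<in>(SIGMA r:{..<R}. {..<R-r}). f r i)"
    by (subst sum.Sigma) auto
  also have "(SIGMA r:{..<R}. {..<R-r}) = {(r,i). r + i < R}" by auto
  also have "(\<Sum>(r,i)\<in>{(r,i). r + i < R}. f r i) = (\<Sum>t<R. \<Sum>r\<le>t. f r (t - r))"
    by (rule sum.triangle_reindex)
  finally show ?thesis .
qed

lemma bracket_zero:
  assumes "z \<noteq> 1" "R > 0"
  shows "1 - (\<Sum>r<R. gco z r s * y^r)
     + z * (\<Sum>r<R. \<Sum>i<R-r. gco z r s * ((-s - of_nat r) gchoose i) * y^(r+i)) = 0"
proof -
  have "(\<Sum>r<R. \<Sum>i<R-r. gco z r s * ((-s - of_nat r) gchoose i) * y^(r+i))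
     = (\<Sum>t<R. \<Sum>r\<le>t. gco z r s * ((-s - of_nat r) gchoose (t - r)) * y^(r + (t - r)))"
    by (rule double_sum_reindex)
  also have "\<dots> = (\<Sum>t<R. (\<Sum>r\<le>t. gco z r s * ((-s - of_nat r) gchoose (t - r))) * y^t)"
    by (intro sum.cong refl) (simp add: sum_distrib_right)
  finally have e1: "(\<Sum>r<R. \<Sum>i<R-r. gco z r s * ((-s - of_nat r) gchoose i) * y^(r+i))
     = (\<Sum>t<R. (\<Sum>r\<le>t. gco z r s * ((-s - of_nat r) gchoose (t - r))) * y^t)" .
  have e0: "(1::complex) = (\<Sum>t<R. (if t = 0 then 1 else 0) * y^t)"
  proof -
    have "(\<Sum>t<R. (if t = 0 then 1 else 0) * y^t) = (\<Sum>t<R. if t = 0 then y^t else 0)"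
      by (intro sum.cong) auto
    also have "\<dots> = 1" using assms(2) by (simp add: sum.delta)
    finally show ?thesis by simp
  qed
  have "1 - (\<Sum>r<R. gco z r s * y^r)
     + z * (\<Sum>t<R. (\<Sum>r\<le>t. gco z r s * ((-s - of_nat r) gchoose (t - r))) * y^t)
     = (\<Sum>t<R. ((if t = 0 then 1 else 0) - gco z t s + z * (\<Sum>r\<le>t. gco z r s * ((-s - of_nat r) gchoose (t - r)))) * y^t)"
    apply (subst e0)
    apply (simp add: sum_distrib_left sum_subtractf[symmetric] sum.distrib[symmetric] algebra_simps)
    done
  also have "\<dots> = 0" using gco_coeff_zero[OF assms(1)] by simp
  finally show ?thesis using e1 by simp
qed


lemma gchoose_norm_le:
  fixes w :: complex
  assumes "cmod w \<le> B" "1 \<le> B"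
  shows "cmod (w gchoose k) \<le> B ^ k"
proof (induction k)
  case 0 then show ?case by simp
next
  case (Suc k)
  have "cmod ((w - of_nat k) / (of_nat k + 1)) \<le> (B + k) / (k + 1)"
  proof -
    have "cmod (w - of_nat k) \<le> B + k" using assms(1) norm_triangle_ineq4[of w "of_nat k"] by simp
    moreover have "cmod (of_nat k + 1 :: complex) = k + 1"
    proof -
      have "(of_nat k + 1 :: complex) = of_nat (Suc k)" by simp
      then show ?thesis by (simp only: norm_of_nat)
    qed
    ultimately show ?thesis by (simp add: norm_divide divide_right_mono)
  qed
  also have "\<dots> \<le> B"
  proof -
    have "real k \<le> B * real k" using mult_right_mono[OF assms(2), of "real k"] by simp
    then show ?thesis by (simp add: divide_le_eq algebra_simps)
  qed
  finally have h: "cmod ((w - of_nat k) / (of_nat k + 1)) \<le> B" .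
  have "cmod (w gchoose Suc k) = cmod (w gchoose k) * cmod ((w - of_nat k) / (of_nat k + 1))"
    by (simp only: gbinomial_Suc_rec norm_mult)
  also have "\<dots> \<le> B ^ k * B" using Suc h assms(2) by (intro mult_mono) auto
  finally show ?case by (simp add: mult.commute)
qed

lemma norm_nat_powr: "cmod (of_nat n powr w) = real n powr Re w"
  using norm_powr_real_powr[of "of_nat n" w] by simp

lemma bin_rem:
  fixes w :: complex and n :: nat and B :: real
  assumes "cmod w \<le> B" "1 \<le> B" "2 * B \<le> real n"
  shows "cmod (of_nat (Suc n) powr w - (\<Sum>i<M. (w gchoose i) * of_nat n powr (w - of_nat i)))
           \<le> 2 * B^M * real n powr (Re w - real M)"
proof -
  have n2: "real n \<ge> 2" using assms by linarith
  define f where "f i = (w gchoose i) * of_nat n powr (w - of_nat i)" for i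
  have "(\<lambda>i. (w gchoose i) * of_real (real n) powr (w - of_nat i) * of_real 1 ^ i) sums
               of_real (real n + 1) powr w"
    by (rule gen_binomial_complex'') (use n2 in auto)
  then have S: "f sums (of_nat (Suc n) powr w)"
    unfolding f_def by (simp add: add.commute)
  define q where "q = B / real n"
  have q: "0 < q" "q \<le> 1/2" using assms n2 by (auto simp: q_def field_simps)
  define K where "K = B^M * real n powr (Re w - real M)"
  have K: "K \<ge> 0" unfolding K_def using assms by simp
  have bnd: "cmod (f (i + M)) \<le> K * q ^ i" for i
  proof -
    have "cmod (f (i + M)) = cmod (w gchoose (i + M)) * real n powr (Re w - real (i + M))"
      unfolding f_def by (simp add: norm_mult norm_nat_powr)
    also have "\<dots> \<le> B ^ (i + M) * real n powr (Re w - real (i + M))"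
      by (intro mult_right_mono gchoose_norm_le assms) auto
    also have "real n powr (Re w - real (i + M)) = real n powr (Re w - real M) / real n ^ i"
    proof -
      have "real n powr (Re w - real M) / real n ^ i = real n powr (Re w - real M) / real n powr (real i)"
        using n2 by (simp add: powr_realpow)
      also have "\<dots> = real n powr (Re w - real M - real i)" by (simp add: powr_diff)
      finally show ?thesis by (simp add: algebra_simps)
    qed
    also have "B ^ (i + M) * (real n powr (Re w - real M) / real n ^ i) = K * q ^ i"
      unfolding K_def q_def by (simp add: power_add power_divide field_simps)
    finally show ?thesis .
  qed
  have gs: "(\<lambda>i. K * q ^ i) sums (K * (1 / (1 - q)))"
    by (intro sums_mult geometric_sums) (use q in auto)
  have "(\<lambda>i. f (i + M)) sums (of_nat (Suc n) powr w - (\<Sum>i<M. f i))"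
    by (rule sums_split_initial_segment[OF S])
  then have "cmod (of_nat (Suc n) powr w - (\<Sum>i<M. f i)) = cmod (\<Sum>i. f (i + M))"
    by (simp add: sums_iff)
  also have "\<dots> \<le> (\<Sum>i. K * q ^ i)"
    by (rule norm_suminf_le[OF bnd]) (use gs in \<open>simp add: sums_iff\<close>)
  also have "\<dots> = K * (1 / (1 - q))" using gs by (simp add: sums_iff)
  also have "\<dots> \<le> K * 2" using q K by (intro mult_left_mono) (auto simp: field_simps)
  finally show ?thesis unfolding f_def K_def by (simp add: mult_ac)
qed


definition hh :: "complex \<Rightarrow> nat \<Rightarrow> nat \<Rightarrow> complex \<Rightarrow> complex" where
  "hh z R n s = z^n * (\<Sum>r<R. gco z r s * of_nat n powr (-s - of_nat r))"

definition ee :: "complex \<Rightarrow> nat \<Rightarrow> nat \<Rightarrow> complex \<Rightarrow> complex" where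
  "ee z R n s = z^n * of_nat n powr (-s) - hh z R n s + hh z R (Suc n) s"

lemma nat_powr_shift:
  assumes "n > 0"
  shows "of_nat n powr (-(s::complex) - of_nat k) = of_nat n powr (-s) * (1 / of_nat n) ^ k"
proof -
  have "of_nat n powr (-s - of_nat k) = of_nat n powr (-s) / of_nat n powr (of_nat k)"
    by (rule powr_diff)
  also have "of_nat n powr (of_nat k :: complex) = of_nat n ^ k" using assms by simp
  finally show ?thesis by (simp add: power_divide)
qed

lemma ee_identity:
  assumes "z \<noteq> 1" "R > 0" "n > 0"
  shows "ee z R n s = z^(Suc n) * (\<Sum>r<R. gco z r s *
     (of_nat (Suc n) powr (-s - of_nat r) -
       (\<Sum>i<R-r. ((-s - of_nat r) gchoose i) * of_nat n powr ((-s - of_nat r) - of_nat i))))"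
proof -
  define P where "P = (of_nat n powr (-s) :: complex)"
  define y where "y = 1 / (of_nat n :: complex)"
  define Q where "Q r = (\<Sum>i<R-r. ((-s - of_nat r) gchoose i) * of_nat n powr ((-s - of_nat r) - of_nat i))" for r
  have Q: "Q r = P * (\<Sum>i<R-r. ((-s - of_nat r) gchoose i) * y^(r+i))" for r
  proof -
    have "of_nat n powr ((-s - of_nat r) - of_nat i) = P * y^(r+i)" for i
      using nat_powr_shift[OF assms(3), of s "r+i"] unfolding P_def y_def
      by (simp add: algebra_simps)
    then show ?thesis unfolding Q_def by (simp add: sum_distrib_left mult_ac)
  qed
  have h1: "hh z R n s = z^n * P * (\<Sum>r<R. gco z r s * y^r)"
    unfolding hh_def P_def y_def
    by (simp add: nat_powr_shift[OF assms(3)] sum_distrib_left mult_ac)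
  have h2: "hh z R (Suc n) s = z^(Suc n) * (\<Sum>r<R. gco z r s * (of_nat (Suc n) powr (-s - of_nat r) - Q r))
       + z^(Suc n) * P * (\<Sum>r<R. \<Sum>i<R-r. gco z r s * ((-s - of_nat r) gchoose i) * y^(r+i))"
    unfolding hh_def Q
    by (simp add: algebra_simps sum_distrib_left sum_subtractf sum.distrib)
  have br: "1 - (\<Sum>r<R. gco z r s * y^r)
     + z * (\<Sum>r<R. \<Sum>i<R-r. gco z r s * ((-s - of_nat r) gchoose i) * y^(r+i)) = 0"
    by (rule bracket_zero[OF assms(1,2)])
  have "ee z R n s = z^n * P * (1 - (\<Sum>r<R. gco z r s * y^r)
     + z * (\<Sum>r<R. \<Sum>i<R-r. gco z r s * ((-s - of_nat r) gchoose i) * y^(r+i)))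
     + z^(Suc n) * (\<Sum>r<R. gco z r s * (of_nat (Suc n) powr (-s - of_nat r) - Q r))"
    unfolding ee_def h1 h2 P_def by (simp add: algebra_simps)
  also have "\<dots> = z^(Suc n) * (\<Sum>r<R. gco z r s * (of_nat (Suc n) powr (-s - of_nat r) - Q r))"
    using br by simp
  finally show ?thesis unfolding Q_def .
qed

lemma gco_bounded: "\<exists>G. \<forall>r. \<forall>s\<in>cball 0 B. cmod (gco z r s) \<le> G r"
proof -
  have "\<forall>r. \<exists>G. \<forall>s\<in>cball 0 B. cmod (gco z r s) \<le> G"
  proof
    fix r
    have "bounded (gco z r ` cball 0 B)"
      by (intro compact_imp_bounded compact_continuous_image holomorphic_on_imp_continuous_on gco_holo compact_cball)
    then show "\<exists>G. \<forall>s\<in>cball 0 B. cmod (gco z r s) \<le> G"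
      by (auto simp: bounded_iff)
  qed
  then show ?thesis by metis
qed

lemma ee_bound:
  assumes "cmod z = 1" "z \<noteq> 1" "R > 0" "B \<ge> 0"
  shows "\<exists>C n0. \<forall>n\<ge>n0. \<forall>s. cmod s \<le> B \<longrightarrow> cmod (ee z R n s) \<le> C * real n powr (- Re s - real R)"
proof -
  obtain G where G0: "\<forall>r. \<forall>s\<in>cball 0 B. cmod (gco z r s) \<le> G r"
    using gco_bounded[of B z] by blast
  have G: "cmod (gco z r s) \<le> G r" if "cmod s \<le> B" for r s
    using G0 that by auto
  define B' where "B' = B + real R + 1"
  define C where "C = (\<Sum>r<R. max (G r) 0 * (2 * B' ^ (R - r)))"
  define n0 where "n0 = nat \<lceil>2 * B'\<rceil>"
  have "\<forall>n\<ge>n0. \<forall>s. cmod s \<le> B \<longrightarrow> cmod (ee z R n s) \<le> C * real n powr (- Re s - real R)"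
  proof (intro allI impI)
    fix n s assume n: "n \<ge> n0" and s: "cmod s \<le> B"
    have nB: "2 * B' \<le> real n" using n unfolding n0_def by linarith
    have B1: "1 \<le> B'" unfolding B'_def using assms(4) by simp
    have npos: "n > 0" using nB B1 by simp
    define Rem where "Rem r = of_nat (Suc n) powr (-s - of_nat r) -
       (\<Sum>i<R-r. ((-s - of_nat r) gchoose i) * of_nat n powr ((-s - of_nat r) - of_nat i))" for r
    have remb: "cmod (Rem r) \<le> 2 * B' ^ (R - r) * real n powr (- Re s - real R)" if r: "r < R" for r
    proof -
      have w: "cmod (-s - of_nat r) \<le> B'"
      proof -
        have "cmod (-s - of_nat r) \<le> cmod s + real r"
          using norm_triangle_ineq4[of "-s" "of_nat r"] by simp
        then show ?thesis unfolding B'_def using s r by simp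
      qed
      have "cmod (Rem r) \<le> 2 * B' ^ (R - r) * real n powr (Re (-s - of_nat r) - real (R - r))"
        unfolding Rem_def by (rule bin_rem[OF w B1 nB])
      also have "Re (-s - of_nat r) - real (R - r) = - Re s - real R" using r by simp
      finally show ?thesis .
    qed
    have "ee z R n s = z^(Suc n) * (\<Sum>r<R. gco z r s * Rem r)"
      unfolding Rem_def by (rule ee_identity[OF assms(2,3) npos])
    then have "cmod (ee z R n s) = cmod (\<Sum>r<R. gco z r s * Rem r)"
      using assms(1) by (simp add: norm_mult norm_power)
    also have "\<dots> \<le> (\<Sum>r<R. cmod (gco z r s * Rem r))" by (rule norm_sum)
    also have "\<dots> \<le> (\<Sum>r<R. max (G r) 0 * (2 * B' ^ (R - r) * real n powr (- Re s - real R)))"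
    proof (intro sum_mono)
      fix r assume "r \<in> {..<R}"
      then have "cmod (Rem r) \<le> 2 * B' ^ (R - r) * real n powr (- Re s - real R)" by (intro remb) auto
      moreover have "cmod (gco z r s) \<le> max (G r) 0" using G[OF s, of r] by simp
      ultimately show "cmod (gco z r s * Rem r) \<le> max (G r) 0 * (2 * B' ^ (R - r) * real n powr (- Re s - real R))"
        unfolding norm_mult by (intro mult_mono) auto
    qed
    also have "\<dots> = C * real n powr (- Re s - real R)"
      unfolding C_def by (simp add: sum_distrib_right mult.assoc)
    finally show "cmod (ee z R n s) \<le> C * real n powr (- Re s - real R)" .
  qed
  then show ?thesis by blast
qed


lemma hh_holo: "hh z R n holomorphic_on S"
  unfolding hh_def by (intro holomorphic_intros holomorphic_on_powr_right gco_holo)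

lemma ee_holo: "ee z R n holomorphic_on S"
  unfolding ee_def by (intro holomorphic_intros holomorphic_on_powr_right hh_holo)

definition PhiR :: "complex \<Rightarrow> nat \<Rightarrow> nat \<Rightarrow> complex \<Rightarrow> complex" where
  "PhiR z R N s = hh z R N s + (\<Sum>i. ee z R (i + N) s)"

lemma summable_shift_powr2: "summable (\<lambda>i. real (i + N) powr (-2))"
proof -
  have "summable (\<lambda>n. real n powr (-2))" by (simp add: summable_real_powr_iff)
  then show ?thesis by (subst summable_iff_shift) 
qed

lemma ee_series_holo:
  assumes "cmod z = 1" "z \<noteq> 1" "R > 0" "B \<ge> 0" "real R \<ge> B + 2"
  shows "(\<lambda>s. \<Sum>i. ee z R (i + N) s) holomorphic_on ball 0 B"
proof -
  obtain C n0 where C: "\<And>n s. n \<ge> n0 \<Longrightarrow> cmod s \<le> B \<Longrightarrow> cmod (ee z R n s) \<le> C * real n powr (- Re s - real R)"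
    using ee_bound[OF assms(1-4)] by blast
  have bnd: "\<forall>\<^sub>F i in sequentially. \<forall>s\<in>cball 0 B. cmod (ee z R (i + N) s) \<le> max C 0 * real (i + N) powr (-2)"
    using eventually_ge_at_top[of n0]
  proof eventually_elim
    case (elim i)
    show ?case
    proof
      fix s :: complex assume s: "s \<in> cball 0 B"
      then have sB: "cmod s \<le> B" by simp
      have "cmod (ee z R (i + N) s) \<le> C * real (i + N) powr (- Re s - real R)"
        using elim sB by (intro C) auto
      also have "\<dots> \<le> max C 0 * real (i + N) powr (- Re s - real R)"
        by (intro mult_right_mono) auto
      also have "\<dots> \<le> max C 0 * real (i + N) powr (-2)"
      proof (cases "i + N = 0")
        case True then show ?thesis by simp
      next
        case False
        have "- Re s \<le> cmod s" using abs_Re_le_cmod[of s] by linarith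
        then have "- Re s - real R \<le> -2" using sB assms(5) by linarith
        then show ?thesis using False by (intro mult_left_mono powr_mono) auto
      qed
      finally show "cmod (ee z R (i + N) s) \<le> max C 0 * real (i + N) powr (-2)" .
    qed
  qed
  have summ: "summable (\<lambda>i. max C 0 * real (i + N) powr (-2))"
    by (intro summable_mult summable_shift_powr2)
  have ul: "uniform_limit (cball 0 B) (\<lambda>n s. \<Sum>i<n. ee z R (i + N) s) (\<lambda>s. \<Sum>i. ee z R (i + N) s) sequentially"
    by (rule Weierstrass_m_test_ev[OF bnd summ])
  show ?thesis
  proof (rule holomorphic_uniform_sequence[where f = "\<lambda>n s. \<Sum>i<n. ee z R (i + N) s"])
    show "open (ball (0::complex) B)" by simp
    show "(\<lambda>s. \<Sum>i<n. ee z R (i + N) s) holomorphic_on ball 0 B" for n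
      by (intro holomorphic_on_sum ee_holo)
    fix x :: complex assume x: "x \<in> ball 0 B"
    define d where "d = (B - cmod x) / 2"
    have d: "0 < d" using x by (simp add: d_def)
    have sub: "cball x d \<subseteq> ball 0 B"
    proof
      fix y assume "y \<in> cball x d"
      then have "cmod (y - x) \<le> d" by (simp add: dist_norm norm_minus_commute)
      then have "cmod y \<le> cmod x + d" using norm_triangle_ineq2[of y x] by linarith
      moreover have "cmod x + d < B" using x by (simp add: d_def field_simps)
      ultimately show "y \<in> ball 0 B" by simp
    qed
    have "uniform_limit (cball x d) (\<lambda>n s. \<Sum>i<n. ee z R (i + N) s) (\<lambda>s. \<Sum>i. ee z R (i + N) s) sequentially"
      by (rule uniform_limit_on_subset[OF ul]) (use sub in auto)
    then show "\<exists>d>0. cball x d \<subseteq> ball 0 B \<and> uniform_limit (cball x d) (\<lambda>n s. \<Sum>i<n. ee z R (i + N) s) (\<lambda>s. \<Sum>i. ee z R (i + N) s) sequentially"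
      using d sub by blast
  qed
qed

lemma PhiR_holo:
  assumes "cmod z = 1" "z \<noteq> 1" "R > 0" "B \<ge> 0" "real R \<ge> B + 2"
  shows "PhiR z R N holomorphic_on ball 0 B"
proof -
  have "(\<lambda>s. hh z R N s + (\<Sum>i. ee z R (i + N) s)) holomorphic_on ball 0 B"
    by (intro holomorphic_on_add hh_holo ee_series_holo[OF assms])
  then show ?thesis unfolding PhiR_def[abs_def] .
qed

lemma hh_tendsto_0:
  assumes "cmod z = 1" "Re s > 0"
  shows "(\<lambda>i. hh z R (i + N) s) \<longlonglongrightarrow> 0"
proof -
  have lim: "filterlim (\<lambda>i. real (i + N)) at_top sequentially"
    by (intro filterlim_compose[OF filterlim_real_sequentially] filterlim_add_const_nat_at_top)
  have "(\<lambda>i. \<Sum>r<R. gco z r s * of_nat (i + N) powr (-s - of_nat r)) \<longlonglongrightarrow> 0"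
  proof (intro tendsto_null_sum)
    fix r assume "r \<in> {..<R}"
    have "(\<lambda>i. real (i + N) powr (- Re s - real r)) \<longlonglongrightarrow> 0"
      by (rule tendsto_neg_powr[OF _ lim]) (use assms in simp)
    then have "(\<lambda>i. cmod (gco z r s) * real (i + N) powr (- Re s - real r)) \<longlonglongrightarrow> 0"
      by (intro tendsto_mult_right_zero)
    then have "(\<lambda>i. cmod (gco z r s * of_nat (i + N) powr (-s - of_nat r))) \<longlonglongrightarrow> 0"
      by (simp only: norm_mult norm_nat_powr) simp
    then show "(\<lambda>i. gco z r s * of_nat (i + N) powr (-s - of_nat r)) \<longlonglongrightarrow> 0"
      by (rule tendsto_norm_zero_cancel)
  qed
  then have "(\<lambda>i. cmod (\<Sum>r<R. gco z r s * of_nat (i + N) powr (-s - of_nat r))) \<longlonglongrightarrow> 0"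
    by (rule tendsto_norm_zero)
  then have "(\<lambda>i. cmod (hh z R (i + N) s)) \<longlonglongrightarrow> 0"
    unfolding hh_def using assms(1) by (simp add: norm_mult norm_power)
  then show ?thesis by (rule tendsto_norm_zero_cancel)
qed

lemma PhiR_series:
  assumes "cmod z = 1" "Re s > 1"
  shows "PhiR z R N s = (\<Sum>i. z ^ (i + N) / (of_nat (i + N)) powr s)"
proof -
  define a where "a i = z ^ (i + N) * of_nat (i + N) powr (-s)" for i
  have "summable (\<lambda>i. real (i + N) powr (- Re s))"
  proof -
    have "summable (\<lambda>n. real n powr (- Re s))" using assms by (simp add: summable_real_powr_iff)
    then show ?thesis by (subst summable_iff_shift)
  qed
  moreover have "cmod (a i) = real (i + N) powr (- Re s)" for i
    unfolding a_def using assms(1) norm_nat_powr[of "i + N" "-s"]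
    by (simp add: norm_mult norm_power del: of_nat_add)
  ultimately have "summable (\<lambda>i. cmod (a i))" by simp
  then have sa: "a sums (\<Sum>i. a i)" by (rule summable_sums[OF summable_norm_cancel])
  have h0: "(\<lambda>i. hh z R (i + N) s) \<longlonglongrightarrow> 0" by (rule hh_tendsto_0) (use assms in auto)
  have tel: "(\<lambda>i. hh z R (i + N) s - hh z R (Suc i + N) s) sums (hh z R N s)"
    using telescope_sums'[OF h0] by simp
  have "(\<lambda>i. a i - (hh z R (i + N) s - hh z R (Suc i + N) s)) sums ((\<Sum>i. a i) - hh z R N s)"
    by (rule sums_diff[OF sa tel])
  moreover have "(\<lambda>i. a i - (hh z R (i + N) s - hh z R (Suc i + N) s)) = (\<lambda>i. ee z R (i + N) s)"
    by (rule ext) (simp add: a_def ee_def)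
  ultimately have "(\<Sum>i. ee z R (i + N) s) = (\<Sum>i. a i) - hh z R N s" by (simp add: sums_iff)
  then have "PhiR z R N s = (\<Sum>i. a i)" unfolding PhiR_def by simp
  also have "a = (\<lambda>i. z ^ (i + N) / (of_nat (i + N)) powr s)"
    by (rule ext) (simp add: a_def powr_minus_divide)
  finally show ?thesis .
qed


lemma PhiR_agree:
  assumes "cmod z = 1" "z \<noteq> 1" "R1 \<ge> 4" "R2 \<ge> 4" "cmod s < min (real R1 - 2) (real R2 - 2)"
  shows "PhiR z R1 N s = PhiR z R2 N s"
proof -
  define b where "b = min (real R1 - 2) (real R2 - 2)"
  have b2: "b \<ge> 2" using assms(3,4) by (simp add: b_def)
  show ?thesis
  proof (rule analytic_continuation_open[of "ball (3/2) (1/4)" "ball 0 b" "PhiR z R1 N" "PhiR z R2 N" s])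
    show "open (ball (3/2::complex) (1/4))" by simp
    show "open (ball (0::complex) b)" by simp
    show "ball (3/2::complex) (1/4) \<noteq> {}" by simp
    show "connected (ball (0::complex) b)" by simp
    show "ball (3/2::complex) (1/4) \<subseteq> ball 0 b"
    proof
      fix y :: complex assume "y \<in> ball (3/2) (1/4)"
      then have "cmod (y - 3/2) < 1/4" by (simp add: dist_norm norm_minus_commute)
      then have "cmod y < 3/2 + 1/4" using norm_triangle_ineq2[of y "3/2"] by simp
      then show "y \<in> ball 0 b" using b2 by simp
    qed
    show "PhiR z R1 N holomorphic_on ball 0 b"
      by (rule PhiR_holo[OF assms(1,2)]) (use assms b2 in \<open>auto simp: b_def\<close>)
    show "PhiR z R2 N holomorphic_on ball 0 b"
      by (rule PhiR_holo[OF assms(1,2)]) (use assms b2 in \<open>auto simp: b_def\<close>)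
    show "s \<in> ball 0 b" using assms(5) by (simp add: b_def)
    fix y :: complex assume "y \<in> ball (3/2) (1/4)"
    then have "cmod (y - 3/2) < 1/4" by (simp add: dist_norm norm_minus_commute)
    moreover have "\<bar>Re (y - 3/2)\<bar> \<le> cmod (y - 3/2)" by (rule abs_Re_le_cmod)
    ultimately have "Re y > 1" by simp
    then show "PhiR z R1 N y = PhiR z R2 N y"
      using PhiR_series[OF assms(1)] by simp
  qed
qed

definition LI :: "complex \<Rightarrow> nat \<Rightarrow> complex \<Rightarrow> complex" where
  "LI z N s = PhiR z (nat \<lceil>cmod s\<rceil> + 4) N s"

lemma LI_eq:
  assumes "cmod z = 1" "z \<noteq> 1" "R \<ge> 4" "cmod s < real R - 2"
  shows "LI z N s = PhiR z R N s"
  unfolding LI_def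
proof (rule PhiR_agree[OF assms(1,2)])
  show "cmod s < min (real (nat \<lceil>cmod s\<rceil> + 4) - 2) (real R - 2)"
    using assms(4) by (simp add: min_def) linarith
qed (use assms in auto)

lemma LI_holo:
  assumes "cmod z = 1" "z \<noteq> 1"
  shows "LI z N holomorphic_on UNIV"
  unfolding holomorphic_on_def
proof
  fix x :: complex
  define R where "R = nat \<lceil>cmod x\<rceil> + 4"
  have R4: "R \<ge> 4" by (simp add: R_def)
  have xin: "x \<in> ball 0 (real R - 2)" by (simp add: R_def) linarith
  have "PhiR z R N holomorphic_on ball 0 (real R - 2)"
    by (rule PhiR_holo[OF assms]) (use R4 in auto)
  then have "LI z N holomorphic_on ball 0 (real R - 2)"
    by (rule holomorphic_transform) (use LI_eq[OF assms R4] in auto)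
  then have "LI z N field_differentiable (at x)"
    using xin by (intro holomorphic_on_imp_differentiable_at) auto
  then show "LI z N field_differentiable (at x within UNIV)" by simp
qed

lemma LI_series:
  assumes "cmod z = 1" "Re s > 1"
  shows "LI z N s = (\<Sum>i. z ^ (i + N) / (of_nat (i + N)) powr s)"
  unfolding LI_def by (rule PhiR_series[OF assms])

lemma Li_star_eq:
  assumes "cmod z = 1" "z \<noteq> 1"
  shows "Li_star z N = LI z N"
  unfolding Li_star_def
proof (rule the_equality)
  show "LI z N holomorphic_on UNIV \<and> (\<forall>s. 1 < Re s \<longrightarrow> LI z N s = (\<Sum>i. z ^ (i + N) / of_nat (i + N) powr s))"
    using LI_holo[OF assms] LI_series[OF assms(1)] by auto
  fix f assume f: "f holomorphic_on UNIV \<and> (\<forall>s. 1 < Re s \<longrightarrow> f s = (\<Sum>i. z ^ (i + N) / of_nat (i + N) powr s))"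
  show "f = LI z N"
  proof
    fix w
    show "f w = LI z N w"
    proof (rule analytic_continuation_open[of "{s. 1 < Re s}" UNIV f "LI z N" w])
      show "open {s. 1 < Re s}" by (rule open_halfspace_Re_gt)
      show "{s. 1 < Re s} \<noteq> {}" by (auto intro!: exI[of _ 2])
      show "f holomorphic_on UNIV" using f by simp
      show "LI z N holomorphic_on UNIV" by (rule LI_holo[OF assms])
      show "\<And>y. y \<in> {s. 1 < Re s} \<Longrightarrow> f y = LI z N y"
        using f LI_series[OF assms(1)] by auto
    qed auto
  qed
qed


lemma higher_deriv_sum:
  assumes "finite I" "\<And>i. i \<in> I \<Longrightarrow> f i holomorphic_on S" "open S" "x \<in> S"
  shows "(deriv ^^ k) (\<lambda>w. \<Sum>i\<in>I. f i w) x = (\<Sum>i\<in>I. (deriv ^^ k) (f i) x)"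
  using assms(1,2)
proof (induction I rule: finite_induct)
  case empty
  then show ?case by (simp add: higher_deriv_const)
next
  case (insert j I)
  have "(deriv ^^ k) (\<lambda>w. f j w + (\<Sum>i\<in>I. f i w)) x = (deriv ^^ k) (f j) x + (deriv ^^ k) (\<lambda>w. \<Sum>i\<in>I. f i w) x"
    by (rule higher_deriv_add[OF _ _ assms(3,4)]) (use insert in \<open>auto intro!: holomorphic_on_sum\<close>)
  then show ?case using insert by simp
qed

lemma higher_deriv_powr:
  fixes c b :: complex
  assumes "c \<noteq> 0"
  shows "(deriv ^^ j) (\<lambda>s. c powr (-s - b)) = (\<lambda>s. (- ln c) ^ j * c powr (-s - b))"
proof (induction j)
  case 0 then show ?case by simp
next
  case (Suc j)
  have e: "c powr (-s - b) = exp ((-s - b) * ln c)" for s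
    using assms by (simp add: powr_def)
  have "deriv (\<lambda>s. (- ln c) ^ j * c powr (-s - b)) s = (- ln c) ^ Suc j * c powr (-s - b)" for s
  proof (rule DERIV_imp_deriv)
    show "((\<lambda>s. (- ln c) ^ j * c powr (-s - b)) has_field_derivative (- ln c) ^ Suc j * c powr (-s - b)) (at s)"
      by (simp only: e) (auto intro!: derivative_eq_intros simp: algebra_simps)
  qed
  note dd = this
  have "(deriv ^^ Suc j) (\<lambda>s. c powr (-s - b)) = deriv (\<lambda>s. (- ln c) ^ j * c powr (-s - b))"
    using Suc by simp
  then show ?case by (simp only: dd)
qed

lemma taylor_hh:
  assumes "n > 0"
  shows "(deriv ^^ k) (hh z R n) x = z ^ n * (\<Sum>r<R. \<Sum>i=0..k.
      of_nat (k choose i) * (deriv ^^ i) (gco z r) x * ((- ln (of_nat n)) ^ (k - i) * of_nat n powr (-x - of_nat r)))"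
proof -
  have "(deriv ^^ k) (hh z R n) x = (deriv ^^ k) (\<lambda>s. z ^ n * (\<Sum>r<R. gco z r s * of_nat n powr (-s - of_nat r))) x"
    unfolding hh_def by simp
  also have "\<dots> = z ^ n * (deriv ^^ k) (\<lambda>s. \<Sum>r<R. gco z r s * of_nat n powr (-s - of_nat r)) x"
    by (rule higher_deriv_cmult[of _ UNIV]) (auto intro!: holomorphic_intros holomorphic_on_powr_right gco_holo)
  also have "(deriv ^^ k) (\<lambda>s. \<Sum>r<R. gco z r s * of_nat n powr (-s - of_nat r)) x
      = (\<Sum>r<R. (deriv ^^ k) (\<lambda>s. gco z r s * of_nat n powr (-s - of_nat r)) x)"
    by (rule higher_deriv_sum[of _ _ UNIV]) (auto intro!: holomorphic_intros holomorphic_on_powr_right gco_holo)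
  also have "\<dots> = (\<Sum>r<R. \<Sum>i=0..k.
      of_nat (k choose i) * (deriv ^^ i) (gco z r) x * ((- ln (of_nat n)) ^ (k - i) * of_nat n powr (-x - of_nat r)))"
  proof (rule sum.cong[OF refl])
    fix r
    have "(deriv ^^ k) (\<lambda>s. gco z r s * of_nat n powr (-s - of_nat r)) x
       = (\<Sum>i=0..k. of_nat (k choose i) * (deriv ^^ i) (gco z r) x * (deriv ^^ (k - i)) (\<lambda>s. of_nat n powr (-s - of_nat r)) x)"
      by (rule higher_deriv_mult[of _ UNIV]) (auto intro!: holomorphic_intros holomorphic_on_powr_right gco_holo)
    also have "\<dots> = (\<Sum>i=0..k. of_nat (k choose i) * (deriv ^^ i) (gco z r) x * ((- ln (of_nat n)) ^ (k - i) * of_nat n powr (-x - of_nat r)))"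
      using assms by (simp add: higher_deriv_powr)
    finally show "(deriv ^^ k) (\<lambda>s. gco z r s * of_nat n powr (-s - of_nat r)) x = \<dots>" .
  qed
  finally show ?thesis .
qed


definition RA :: "int \<Rightarrow> int \<Rightarrow> nat" where "RA a A = nat (\<bar>a\<bar> + max A 0 + 8)"

definition cf0 :: "complex \<Rightarrow> int \<Rightarrow> nat \<Rightarrow> nat \<Rightarrow> int \<Rightarrow> complex" where
  "cf0 z a k l m = of_nat (k choose (k - l)) * (deriv ^^ (k - l)) (gco z (nat (m - a))) (of_int a) * (-1) ^ l / fact k"

definition boxk :: "int \<Rightarrow> int \<Rightarrow> nat \<Rightarrow> (nat \<times> int) set" where
  "boxk a A k = {(l, m). l \<le> k \<and> a \<le> m \<and> m < a + int (RA a A)}"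

lemma boxk_finite: "finite (boxk a A k)"
proof -
  have "boxk a A k \<subseteq> {..k} \<times> {a..<a + int (RA a A)}" by (auto simp: boxk_def)
  then show ?thesis by (rule finite_subset) auto
qed

lemma taylor_hh_box:
  assumes "n > 0"
  shows "(deriv ^^ k) (hh z (RA a A) n) (of_int a) / fact k =
    (\<Sum>(l, m)\<in>boxk a A k. z ^ n * cf0 z a k l m * of_real (ln (real n) ^ l * real n powr (- real_of_int m)))"
proof -
  define R where "R = RA a A"
  have "(deriv ^^ k) (hh z R n) (of_int a) / fact k = z ^ n * (\<Sum>r<R. \<Sum>i=0..k.
      of_nat (k choose i) * (deriv ^^ i) (gco z r) (of_int a) * ((- ln (of_nat n)) ^ (k - i) * of_nat n powr (-(of_int a) - of_nat r))) / fact k"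
    by (simp add: taylor_hh[OF assms])
  also have "\<dots> = (\<Sum>(r, i)\<in>{..<R} \<times> {0..k}. z ^ n * (of_nat (k choose i) * (deriv ^^ i) (gco z r) (of_int a) * ((- ln (of_nat n)) ^ (k - i) * of_nat n powr (-(of_int a) - of_nat r))) / fact k)"
    by (simp add: sum.cartesian_product[symmetric] sum_distrib_left sum_divide_distrib)
  also have "\<dots> = (\<Sum>(l, m)\<in>boxk a A k. z ^ n * cf0 z a k l m * of_real (ln (real n) ^ l * real n powr (- real_of_int m)))"
  proof (rule sum.reindex_bij_witness[where j = "\<lambda>(r, i). (k - i, a + int r)" and i = "\<lambda>(l, m). (nat (m - a), k - l)"])
    fix p assume "p \<in> {..<R} \<times> {0..k}"
    then obtain r i where p: "p = (r, i)" "r < R" "i \<le> k" by auto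
    show "(case (case p of (r, i) \<Rightarrow> (k - i, a + int r)) of (l, m) \<Rightarrow> (nat (m - a), k - l)) = p"
      using p by auto
    show "(case p of (r, i) \<Rightarrow> (k - i, a + int r)) \<in> boxk a A k"
      using p by (auto simp: boxk_def R_def)
    have ln: "ln (of_nat n :: complex) = of_real (ln (real n))" using assms by simp
    have pw: "(of_nat n :: complex) powr (-(of_int a) - of_nat r) = of_real (real n powr (- real_of_int (a + int r)))"
    proof -
      have "(of_nat n :: complex) powr (-(of_int a) - of_nat r) = of_real (real n) powr of_real (- real_of_int (a + int r))"
        by simp
      also have "\<dots> = of_real (real n powr (- real_of_int (a + int r)))" by (rule powr_of_real) simp
      finally show ?thesis .
    qed
    have cf: "cf0 z a k (k - i) (a + int r) = of_nat (k choose i) * (deriv ^^ i) (gco z r) (of_int a) * (-1) ^ (k - i) / fact k"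
      using p by (simp add: cf0_def)
    show "(case case p of (r, i) \<Rightarrow> (k - i, a + int r) of (l, m) \<Rightarrow> z ^ n * cf0 z a k l m * of_real (ln (real n) ^ l * real n powr (- real_of_int m)))
        = (case p of (r, i) \<Rightarrow> z ^ n * (of_nat (k choose i) * (deriv ^^ i) (gco z r) (of_int a) * ((- ln (of_nat n)) ^ (k - i) * of_nat n powr (-(of_int a) - of_nat r))) / fact k)"
      using p by (simp add: cf ln pw power_minus[of "of_real (ln (real n))"] algebra_simps)
  next
    fix q assume "q \<in> boxk a A k"
    then obtain l m where q: "q = (l, m)" "l \<le> k" "a \<le> m" "m < a + int R" by (auto simp: boxk_def R_def)
    show "(case (case q of (l, m) \<Rightarrow> (nat (m - a), k - l)) of (r, i) \<Rightarrow> (k - i, a + int r)) = q"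
      using q by auto
    show "(case q of (l, m) \<Rightarrow> (nat (m - a), k - l)) \<in> {..<R} \<times> {0..k}"
      using q by auto
  qed
  finally show ?thesis unfolding R_def .
qed


definition En :: "complex \<Rightarrow> nat \<Rightarrow> nat \<Rightarrow> complex \<Rightarrow> complex" where
  "En z R n s = (\<Sum>i. ee z R (i + n) s)"

lemma RA_props: "RA a A > 0" "real (RA a A) = \<bar>a\<bar> + max A 0 + 8"
  by (auto simp: RA_def)

lemma F_decomp:
  assumes "cmod z = 1" "z \<noteq> 1"
  shows "taylor_coeff (Li_star z n) (of_int a) k =
     (deriv ^^ k) (hh z (RA a A) n) (of_int a) / fact k + (deriv ^^ k) (En z (RA a A) n) (of_int a) / fact k"
proof -
  define R where "R = RA a A"
  define S where "S = ball (0::complex) (real R - 2)"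
  have R4: "R \<ge> 4" unfolding R_def RA_def by linarith
  have aS: "of_int a \<in> S" unfolding S_def R_def using RA_props(2)[of a A] by simp
  have oS: "open S" by (simp add: S_def)
  have "\<forall>\<^sub>F s in nhds (of_int a). LI z n s = PhiR z R n s"
  proof (rule eventually_nhds_in_open[OF oS aS, THEN eventually_mono])
    fix s assume "s \<in> S"
    then show "LI z n s = PhiR z R n s" by (intro LI_eq[OF assms R4]) (auto simp: S_def)
  qed
  then have "(deriv ^^ k) (LI z n) (of_int a) = (deriv ^^ k) (PhiR z R n) (of_int a)"
    by (rule higher_deriv_cong_ev) simp
  also have "PhiR z R n = (\<lambda>s. hh z R n s + En z R n s)"
    by (auto simp: PhiR_def En_def fun_eq_iff)
  also have "(deriv ^^ k) (\<lambda>s. hh z R n s + En z R n s) (of_int a) = (deriv ^^ k) (hh z R n) (of_int a) + (deriv ^^ k) (En z R n) (of_int a)"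
  proof (rule higher_deriv_add[OF hh_holo _ oS aS])
    show "En z R n holomorphic_on S" unfolding S_def En_def[abs_def]
      by (rule ee_series_holo[OF assms]) (use R4 in auto)
  qed
  finally show ?thesis
    unfolding taylor_coeff_def Li_star_eq[OF assms] R_def by (simp add: add_divide_distrib)
qed

lemma taylor_En_bound:
  assumes "cmod z = 1" "z \<noteq> 1"
  shows "\<exists>K n1. \<forall>n\<ge>n1. cmod ((deriv ^^ k) (En z (RA a A) n) (of_int a)) \<le> K * real n powr (- real_of_int (max A 0))"
proof -
  define R where "R = RA a A"
  define A' where "A' = max A 0"
  define B where "B = real R - 2"
  have RB: "real R = \<bar>a\<bar> + A' + 8" unfolding R_def A'_def by (rule RA_props(2))
  have R0: "R > 0" unfolding R_def by (rule RA_props(1))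
  have A'0: "A' \<ge> 0" by (simp add: A'_def)
  have RB': "real R - 2 = \<bar>real_of_int a\<bar> + real_of_int A' + 6" using RB by simp
  have B0: "B \<ge> 0" unfolding B_def RB' using A'0 by simp
  obtain C n0 where C0: "\<forall>m\<ge>n0. \<forall>s. cmod s \<le> B \<longrightarrow> cmod (ee z R m s) \<le> C * real m powr (- Re s - real R)"
    using ee_bound[OF assms R0 B0] by blast
  have C: "cmod (ee z R m s) \<le> C * real m powr (- Re s - real R)" if "m \<ge> n0" "cmod s \<le> B" for m s
    using C0 that by blast
  define Z where "Z = (\<Sum>i. real (i + 1) powr (-2))"
  define K where "K = fact k * (max C 0 * Z)"
  have "\<forall>n\<ge>max n0 1. cmod ((deriv ^^ k) (En z R n) (of_int a)) \<le> K * real n powr (- real_of_int A')"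
  proof (intro allI impI)
    fix n assume n: "n \<ge> max n0 1"
    have S: "En z R n holomorphic_on ball 0 B" unfolding En_def[abs_def]
      by (rule ee_series_holo[OF assms R0 B0]) (simp add: B_def)
    have sub: "cball (of_int a) 1 \<subseteq> ball (0::complex) B"
    proof
      fix s :: complex assume "s \<in> cball (of_int a) 1"
      then have "cmod (s - of_int a) \<le> 1" by (simp add: dist_norm norm_minus_commute)
      then have "cmod s \<le> \<bar>a\<bar> + 1" using norm_triangle_ineq2[of s "of_int a"] by simp
      then show "s \<in> ball 0 B" using A'0 unfolding B_def RB' by simp
    qed
    have bd: "cmod (En z R n s) \<le> max C 0 * Z * real n powr (- real_of_int A')" if s: "cmod (of_int a - s) = 1" for s
    proof -
      have sa: "cmod (s - of_int a) = 1" using s by (simp add: norm_minus_commute)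
      have "cmod s \<le> \<bar>real_of_int a\<bar> + 1" using sa norm_triangle_ineq2[of s "of_int a"] by simp
      then have sB: "cmod s \<le> B" using A'0 unfolding B_def RB' by simp
      have "\<bar>Re (s - of_int a)\<bar> \<le> 1" using abs_Re_le_cmod[of "s - of_int a"] sa by simp
      then have Res: "Re s \<ge> a - 1" by simp
      have tb: "cmod (ee z R (i + n) s) \<le> max C 0 * real n powr (- real_of_int A') * real (i + 1) powr (-2)" for i
      proof -
        have "cmod (ee z R (i + n) s) \<le> C * real (i + n) powr (- Re s - real R)"
          using n sB by (intro C) auto
        also have "\<dots> \<le> max C 0 * real (i + n) powr (- Re s - real R)"
          by (intro mult_right_mono) auto
        also have "real (i + n) powr (- Re s - real R) \<le> real (i + n) powr (- real_of_int A' - 2)"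
        proof (rule powr_mono)
          have "- real_of_int a \<le> \<bar>real_of_int a\<bar>" by (rule abs_ge_minus_self)
          then show "- Re s - real R \<le> - real_of_int A' - 2" using Res RB by simp
          show "1 \<le> real (i + n)" using n by simp
        qed
        also have "\<dots> = real (i + n) powr (- real_of_int A') * real (i + n) powr (-2)"
          by (simp add: powr_add[symmetric])
        also have "\<dots> \<le> real n powr (- real_of_int A') * real (i + 1) powr (-2)"
        proof (intro mult_mono)
          show "real (i + n) powr (- real_of_int A') \<le> real n powr (- real_of_int A')"
            using n by (intro powr_mono2') (simp_all add: A'_def)
          show "real (i + n) powr (-2) \<le> real (i + 1) powr (-2)"
            using n by (intro powr_mono2') simp_all
        qed auto
        finally show ?thesis by (simp add: mult_left_mono mult.assoc)
      qed
      have "cmod (En z R n s) \<le> (\<Sum>i. max C 0 * real n powr (- real_of_int A') * real (i + 1) powr (-2))"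
        unfolding En_def
        by (rule norm_suminf_le[OF tb]) (intro summable_mult summable_shift_powr2)
      also have "\<dots> = max C 0 * real n powr (- real_of_int A') * Z"
        unfolding Z_def by (rule suminf_mult) (rule summable_shift_powr2)
      finally show ?thesis by (simp add: mult_ac)
    qed
    have "cmod ((deriv ^^ k) (En z R n) (of_int a)) \<le> fact k * (max C 0 * Z * real n powr (- real_of_int A')) / 1 ^ k"
    proof (rule Cauchy_inequality)
      show "En z R n holomorphic_on ball (of_int a) 1"
        by (rule holomorphic_on_subset[OF S]) (use sub ball_subset_cball in blast)
      show "continuous_on (cball (of_int a) 1) (En z R n)"
        by (rule holomorphic_on_imp_continuous_on, rule holomorphic_on_subset[OF S sub])
      show "(0::real) < 1" by simp
      show "\<And>x. cmod (of_int a - x) = 1 \<Longrightarrow> cmod (En z R n x) \<le> max C 0 * Z * real n powr (- real_of_int A')"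
        by (rule bd)
    qed
    then show "cmod ((deriv ^^ k) (En z R n) (of_int a)) \<le> K * real n powr (- real_of_int A')"
      by (simp add: K_def mult_ac)
  qed
  then show ?thesis unfolding R_def A'_def by blast
qed



lemma ra1: "(m::real) < m' \<Longrightarrow> ((\<lambda>x::real. (ln x ^ l' * x powr (-m')) / (ln x ^ l * x powr (-m))) \<longlongrightarrow> 0) at_top"
  by real_asymp
lemma ra2: "(l'::nat) < l \<Longrightarrow> ((\<lambda>x::real. (ln x ^ l' * x powr (-m)) / (ln x ^ l * x powr (-m))) \<longlongrightarrow> 0) at_top"
  by real_asymp
lemma ra3: "(m::real) < A \<Longrightarrow> ((\<lambda>x::real. x powr (-A) / (ln x ^ l * x powr (-m))) \<longlongrightarrow> 0) at_top"
  by real_asymp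
lemma ra4: "((\<lambda>x::real. ln x ^ l / x) \<longlongrightarrow> 0) at_top"
  by real_asymp

lemma expansion_unique:
  fixes v :: "nat \<times> int \<Rightarrow> nat \<Rightarrow> complex" and S :: "(nat \<times> int) set" and A :: int and d :: nat
  assumes fin: "finite S" and d: "d > 0" and per: "\<And>p n. p \<in> S \<Longrightarrow> n \<ge> 1 \<Longrightarrow> v p (n + d) = v p n"
    and O: "(\<lambda>n. \<Sum>p\<in>S. v p n * of_real (ln (real n) ^ fst p * real n powr (- real_of_int (snd p))))
              \<in> O(\<lambda>n. of_real (real n powr (- real_of_int A)))"
    and pS: "p \<in> S" and pA: "snd p < A" and n1: "n \<ge> 1"
  shows "v p n = 0"
proof (rule ccontr)
  assume nz: "v p n \<noteq> 0"
  define f where "f n = (\<Sum>p\<in>S. v p n * of_real (ln (real n) ^ fst p * real n powr (- real_of_int (snd p))))" for n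
  define D where "D = {p\<in>S. \<exists>n\<ge>1. v p n \<noteq> 0}"
  have finD: "finite D" using fin by (simp add: D_def)
  have pD: "p \<in> D" using pS nz n1 by (auto simp: D_def)
  define ms where "ms = Min (snd ` D)"
  have ms_le: "ms \<le> snd q" if "q \<in> D" for q using finD that by (simp add: ms_def)
  have ms_in: "ms \<in> snd ` D" unfolding ms_def using finD pD by (intro Min_in) auto
  have msA: "ms < A" using ms_le[OF pD] pA by simp
  define L where "L = {l. (l, ms) \<in> D}"
  have finL: "finite L"
  proof -
    have "L \<subseteq> fst ` D" by (force simp: L_def)
    then show ?thesis using finD finite_subset by blast
  qed
  have Lne: "L \<noteq> {}" using ms_in by (force simp: L_def)
  define ls where "ls = Max L"
  have ls_ge: "l \<le> ls" if "l \<in> L" for l using finL that by (simp add: ls_def)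
  have ls_in: "ls \<in> L" unfolding ls_def using finL Lne by (rule Max_in)
  define ps where "ps = (ls, ms)"
  have psD: "ps \<in> D" using ls_in by (simp add: ps_def L_def)
  then have psS: "ps \<in> S" by (simp add: D_def)
  obtain j where j1: "j \<ge> 1" and cj: "v ps j \<noteq> 0" using psD by (auto simp: D_def)
  define c where "c = v ps j"
  have perq: "v q (j + d * k) = v q j" if "q \<in> S" for q k
  proof (induction k)
    case 0 then show ?case by simp
  next
    case (Suc k)
    have "v q (j + d * Suc k) = v q ((j + d * k) + d)" by (simp add: algebra_simps)
    also have "\<dots> = v q (j + d * k)" using per[OF that] j1 by simp
    finally show ?case using Suc by simp
  qed
  define xq where "xq k = real (j + d * k)" for k
  have lim_nat: "filterlim (\<lambda>k. j + d * k) at_top sequentially"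
  proof (rule filterlim_at_top_mono[OF filterlim_ident])
    show "\<forall>\<^sub>F k in sequentially. k \<le> j + d * k"
    proof (rule always_eventually, rule allI)
      fix k :: nat
      have "k \<le> d * k" using d by simp
      then show "k \<le> j + d * k" by linarith
    qed
  qed
  have limx: "filterlim xq at_top sequentially"
    unfolding xq_def by (rule filterlim_compose[OF filterlim_real_sequentially lim_nat])
  define w where "w x = ln x ^ ls * x powr (- real_of_int ms)" for x :: real
  have ev1: "\<forall>\<^sub>F k in sequentially. xq k > 1" using limx by (simp add: filterlim_at_top_dense)
  have term_lim: "((\<lambda>k. v q j * of_real ((ln (xq k) ^ fst q * xq k powr (- real_of_int (snd q))) / w (xq k))) \<longlongrightarrow>
        (if q = ps then c else 0)) sequentially" if qS: "q \<in> S" for q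
  proof (cases "q = ps")
    case True
    have "\<forall>\<^sub>F k in sequentially. v q j * of_real ((ln (xq k) ^ fst q * xq k powr (- real_of_int (snd q))) / w (xq k)) = c"
      using ev1
    proof eventually_elim
      case (elim k)
      then have "ln (xq k) > 0" by simp
      then have wne: "w (xq k) \<noteq> 0" using elim by (simp add: w_def)
      have "ln (xq k) ^ fst q * xq k powr (- real_of_int (snd q)) = w (xq k)"
        using True by (simp add: ps_def w_def)
      then show ?case using wne True by (simp add: c_def)
    qed
    then show ?thesis using True by (simp add: tendsto_eventually)
  next
    case False
    show ?thesis
    proof (cases "q \<in> D")
      case False
      then have "v q j = 0" using qS j1 by (auto simp: D_def)
      then show ?thesis using \<open>q \<noteq> ps\<close> by simp
    next
      case True
      obtain l m where q: "q = (l, m)" by (cases q)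
      have mm: "ms \<le> m" using ms_le[OF True] q by simp
      have lim0: "((\<lambda>x::real. (ln x ^ l * x powr (- real_of_int m)) / w x) \<longlongrightarrow> 0) at_top"
      proof (cases "m = ms")
        case True
        then have "l \<in> L" using \<open>q \<in> D\<close> q by (simp add: L_def)
        then have "l < ls" using ls_ge[of l] \<open>q \<noteq> ps\<close> q True by (force simp: ps_def)
        then show ?thesis unfolding w_def True by (rule ra2)
      next
        case False
        then have "real_of_int ms < real_of_int m" using mm by simp
        then show ?thesis unfolding w_def by (rule ra1)
      qed
      have "((\<lambda>k. (ln (xq k) ^ l * xq k powr (- real_of_int m)) / w (xq k)) \<longlongrightarrow> 0) sequentially"
        by (rule filterlim_compose[OF lim0 limx])
      then have "((\<lambda>k. v q j * of_real ((ln (xq k) ^ l * xq k powr (- real_of_int m)) / w (xq k))) \<longlongrightarrow> v q j * of_real 0) sequentially"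
        by (intro tendsto_mult tendsto_const tendsto_of_real)
      then show ?thesis using \<open>q \<noteq> ps\<close> q by simp
    qed
  qed
  have "((\<lambda>k. \<Sum>q\<in>S. v q j * of_real ((ln (xq k) ^ fst q * xq k powr (- real_of_int (snd q))) / w (xq k))) \<longlongrightarrow>
        (\<Sum>q\<in>S. if q = ps then c else 0)) sequentially"
    by (rule tendsto_sum) (rule term_lim)
  moreover have "(\<Sum>q\<in>S. if q = ps then c else 0) = c" using fin psS by simp
  moreover have "(\<lambda>k. \<Sum>q\<in>S. v q j * of_real ((ln (xq k) ^ fst q * xq k powr (- real_of_int (snd q))) / w (xq k)))
      = (\<lambda>k. f (j + d * k) / of_real (w (xq k)))"
    by (rule ext) (simp add: f_def xq_def perq sum_divide_distrib)
  ultimately have L1: "((\<lambda>k. f (j + d * k) / of_real (w (xq k))) \<longlongrightarrow> c) sequentially" by simp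
  obtain K where K: "K > 0" and Kb: "\<forall>\<^sub>F n in sequentially. norm (f n) \<le> K * norm (of_real (real n powr (- real_of_int A)) :: complex)"
    using O unfolding f_def[abs_def] by (elim landau_o.bigE) auto
  have Kb': "\<forall>\<^sub>F k in sequentially. norm (f (j + d * k)) \<le> K * xq k powr (- real_of_int A)"
    using filterlim_iff[THEN iffD1, OF lim_nat, rule_format, OF Kb] by (simp add: xq_def)
  have g0: "((\<lambda>k. K * (xq k powr (- real_of_int A) / w (xq k))) \<longlongrightarrow> K * 0) sequentially"
    by (intro tendsto_mult tendsto_const filterlim_compose[OF _ limx]) (unfold w_def, rule ra3, simp add: msA)
  have L2: "((\<lambda>k. f (j + d * k) / of_real (w (xq k))) \<longlongrightarrow> 0) sequentially"
  proof (rule Lim_null_comparison)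
    show "\<forall>\<^sub>F k in sequentially. norm (f (j + d * k) / of_real (w (xq k))) \<le> K * (xq k powr (- real_of_int A) / w (xq k))"
      using Kb' ev1
    proof eventually_elim
      case (elim k)
      then have "ln (xq k) > 0" by simp
      then have wp: "w (xq k) > 0" using elim by (simp add: w_def)
      have "norm (f (j + d * k) / of_real (w (xq k))) = norm (f (j + d * k)) / w (xq k)"
        using wp by (simp add: norm_divide)
      also have "\<dots> \<le> K * xq k powr (- real_of_int A) / w (xq k)"
        using elim wp by (intro divide_right_mono) auto
      finally show ?case by simp
    qed
    show "((\<lambda>k. K * (xq k powr (- real_of_int A) / w (xq k))) \<longlongrightarrow> 0) sequentially" using g0 by simp
  qed
  have "c = 0" using tendsto_unique[OF _ L1 L2] by simp
  then show False using cj by (simp add: c_def)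
qed



lemma mono_vals_single: "mono_vals [z] = range (\<lambda>e. z ^ e)"
proof -
  have "mono_vals [z] = {z ^ (e::nat\<Rightarrow>nat) 0 | e. True}" by (simp add: mono_vals_def)
  also have "\<dots> = range (\<lambda>e. z ^ e)"
  proof
    show "{z ^ (e::nat\<Rightarrow>nat) 0 | e. True} \<subseteq> range (\<lambda>e. z ^ e)" by auto
    show "range (\<lambda>e. z ^ e) \<subseteq> {z ^ (e::nat\<Rightarrow>nat) 0 | e. True}"
    proof
      fix x assume "x \<in> range (\<lambda>e. z ^ e)"
      then obtain k where "x = z ^ k" by auto
      then show "x \<in> {z ^ (e::nat\<Rightarrow>nat) 0 | e. True}" by (intro CollectI exI[of _ "\<lambda>_. k"]) simp
    qed
  qed
  finally show ?thesis .
qed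

lemma mono_vals_root: assumes "z ^ d = 1" "\<xi> \<in> mono_vals [z]" shows "\<xi> ^ d = 1"
proof -
  obtain e where "\<xi> = z ^ e" using assms(2) by (auto simp: mono_vals_single)
  moreover have "(z ^ e) ^ d = (z ^ d) ^ e" by (simp only: power_mult[symmetric] mult.commute)
  ultimately show ?thesis using assms(1) by simp
qed

lemma mono_vals_finite: assumes "d > 0" "z ^ d = 1" shows "finite (mono_vals [z])"
proof -
  have "range (\<lambda>e. z ^ e) \<subseteq> (\<lambda>e. z ^ e) ` {..<d}"
  proof
    fix x assume "x \<in> range (\<lambda>e. z ^ e)"
    then obtain e where x: "x = z ^ e" by auto
    have "z ^ e = z ^ (e mod d + d * (e div d))" by (simp only: mod_mult_div_eq)
    also have "\<dots> = z ^ (e mod d) * (z ^ d) ^ (e div d)" by (simp only: power_add power_mult)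
    also have "\<dots> = z ^ (e mod d)" using assms(2) by simp
    finally show "x \<in> (\<lambda>e. z ^ e) ` {..<d}" using x assms(1) by auto
  qed
  then show ?thesis unfolding mono_vals_single by (rule finite_subset) auto
qed

lemma one_in_mono_vals: "1 \<in> mono_vals [z]"
  unfolding mono_vals_single by (auto intro!: range_eqI[of _ _ 0])

lemma z_in_mono_vals: "z \<in> mono_vals [z]"
  unfolding mono_vals_single by (auto intro!: range_eqI[of _ _ 1])

lemma sum_root_powers:
  fixes \<xi> :: complex
  assumes "\<xi> ^ d = 1" "d > 0"
  shows "(\<Sum>n=1..d. \<xi> ^ n) = (if \<xi> = 1 then of_nat d else 0)"
proof (cases "\<xi> = 1")
  case True then show ?thesis by simp
next
  case False
  have "(\<Sum>n=1..d. \<xi> ^ n) = (\<xi> ^ 1 - \<xi> ^ Suc d) / (1 - \<xi>)"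
    using False assms(2) by (simp add: sum_gp)
  also have "\<xi> ^ Suc d = \<xi>" using assms(1) by simp
  finally show ?thesis using False by simp
qed

lemma coord_avg:
  assumes "d > 0" "z ^ d = 1" "\<forall>n\<ge>1. u n = (\<Sum>\<xi>\<in>mono_vals [z]. c \<xi> * \<xi> ^ n)"
  shows "c 1 = (\<Sum>n=1..d. u n) / of_nat d"
proof -
  define M where "M = mono_vals [z]"
  have finM: "finite M" unfolding M_def by (rule mono_vals_finite[OF assms(1,2)])
  have "(\<Sum>n=1..d. u n) = (\<Sum>n=1..d. \<Sum>\<xi>\<in>M. c \<xi> * \<xi> ^ n)"
    using assms(3) by (intro sum.cong) (auto simp: M_def)
  also have "\<dots> = (\<Sum>\<xi>\<in>M. c \<xi> * (\<Sum>n=1..d. \<xi> ^ n))"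
    by (subst sum.swap) (simp add: sum_distrib_left)
  also have "\<dots> = (\<Sum>\<xi>\<in>M. if \<xi> = 1 then c \<xi> * of_nat d else 0)"
  proof (intro sum.cong refl)
    fix \<xi> assume "\<xi> \<in> M"
    then have r: "\<xi> ^ d = 1" using mono_vals_root[OF assms(2)] by (simp add: M_def)
    show "c \<xi> * (\<Sum>n=1..d. \<xi> ^ n) = (if \<xi> = 1 then c \<xi> * of_nat d else 0)"
      by (subst sum_root_powers[OF r assms(1)]) simp
  qed
  also have "\<dots> = (if 1 \<in> M then c 1 * of_nat d else 0)" by (rule sum.delta[OF finM])
  also have "\<dots> = c 1 * of_nat d" using one_in_mono_vals[of z] by (simp add: M_def)
  finally have eq: "(\<Sum>n=1..d. u n) = c 1 * of_nat d" .
  have nz: "(of_nat d :: complex) \<noteq> 0" using assms(1) by simp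
  show ?thesis unfolding eq using nz by (rule nonzero_mult_div_cancel_right[symmetric])
qed

lemma const_coord_avg:
  assumes "d > 0" "z ^ d = 1" "u \<in> seq_alg [z]"
  shows "const_coord [z] u = (\<Sum>n=1..d. u n) / of_nat d"
proof -
  obtain c where c: "\<forall>n\<ge>1. u n = (\<Sum>\<xi>\<in>mono_vals [z]. c \<xi> * \<xi> ^ n)"
    using assms(3) by (auto simp: seq_alg_def)
  show ?thesis unfolding const_coord_def
  proof (rule the_equality)
    show "\<exists>c'. (\<forall>n\<ge>1. u n = (\<Sum>\<xi>\<in>mono_vals [z]. c' \<xi> * \<xi> ^ n)) \<and> c' 1 = (\<Sum>n=1..d. u n) / of_nat d"
      using c coord_avg[OF assms(1,2) c] by blast
    fix c1 assume "\<exists>c'. (\<forall>n\<ge>1. u n = (\<Sum>\<xi>\<in>mono_vals [z]. c' \<xi> * \<xi> ^ n)) \<and> c' 1 = c1"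
    then obtain c' where "\<forall>n\<ge>1. u n = (\<Sum>\<xi>\<in>mono_vals [z]. c' \<xi> * \<xi> ^ n)" "c' 1 = c1" by blast
    then show "c1 = (\<Sum>n=1..d. u n) / of_nat d" using coord_avg[OF assms(1,2)] by blast
  qed
qed

lemma seq_alg_periodic:
  assumes "z ^ d = 1" "u \<in> seq_alg [z]" "n \<ge> 1"
  shows "u (n + d) = u n"
proof -
  obtain c where c: "\<forall>n\<ge>1. u n = (\<Sum>\<xi>\<in>mono_vals [z]. c \<xi> * \<xi> ^ n)"
    using assms(2) by (auto simp: seq_alg_def)
  have "u (n + d) = (\<Sum>\<xi>\<in>mono_vals [z]. c \<xi> * \<xi> ^ (n + d))" using c assms(3) by simp
  also have "\<dots> = (\<Sum>\<xi>\<in>mono_vals [z]. c \<xi> * \<xi> ^ n)"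
    using mono_vals_root[OF assms(1)] by (intro sum.cong) (auto simp: power_add)
  also have "\<dots> = u n" using c assms(3) by simp
  finally show ?thesis .
qed

lemma seq_alg_zpow:
  assumes "d > 0" "z ^ d = 1"
  shows "(\<lambda>n. z ^ n * c) \<in> seq_alg [z]"
proof -
  have fin: "finite (mono_vals [z])" by (rule mono_vals_finite[OF assms])
  have "\<forall>n\<ge>1. z ^ n * c = (\<Sum>\<xi>\<in>mono_vals [z]. (if \<xi> = z then c else 0) * \<xi> ^ n)"
  proof (intro allI impI)
    fix n :: nat
    have "(\<Sum>\<xi>\<in>mono_vals [z]. (if \<xi> = z then c else 0) * \<xi> ^ n) = (\<Sum>\<xi>\<in>mono_vals [z]. if \<xi> = z then c * z ^ n else 0)"
      by (intro sum.cong) auto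
    also have "\<dots> = c * z ^ n" using fin z_in_mono_vals[of z] by simp
    finally show "z ^ n * c = (\<Sum>\<xi>\<in>mono_vals [z]. (if \<xi> = z then c else 0) * \<xi> ^ n)" by (simp add: mult.commute)
  qed
  then have "\<exists>c'. \<forall>n\<ge>1. z ^ n * c = (\<Sum>\<xi>\<in>mono_vals [z]. c' \<xi> * \<xi> ^ n)"
    by (rule exI[where x = "\<lambda>\<xi>. if \<xi> = z then c else 0"])
  then show ?thesis unfolding seq_alg_def by simp
qed

lemma const_coord_zpow:
  assumes "d > 0" "z ^ d = 1" "z \<noteq> 1"
  shows "const_coord [z] (\<lambda>n. z ^ n * c) = 0"
proof -
  have "const_coord [z] (\<lambda>n. z ^ n * c) = (\<Sum>n=1..d. z ^ n * c) / of_nat d"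
    by (rule const_coord_avg[OF assms(1,2) seq_alg_zpow[OF assms(1,2)]])
  also have "(\<Sum>n=1..d. z ^ n * c) = (\<Sum>n=1..d. z ^ n) * c" by (simp add: sum_distrib_right)
  also have "(\<Sum>n=1..d. z ^ n) = 0" using sum_root_powers[OF assms(2,1)] assms(3) by simp
  finally show ?thesis by simp
qed




definition ourU :: "complex \<Rightarrow> int \<Rightarrow> int \<Rightarrow> nat \<Rightarrow> nat \<Rightarrow> int \<Rightarrow> nat \<Rightarrow> complex" where
  "ourU z a A k l m = (\<lambda>n. z ^ n * (if (l, m) \<in> boxk a A k \<and> m \<le> A then cf0 z a k l m else 0))"

lemma LN_bound:
  assumes "A < m"
  shows "\<forall>\<^sub>F n in sequentially. \<bar>ln (real n) ^ l * real n powr (- real_of_int m)\<bar> \<le> real n powr (- real_of_int A)"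
proof -
  have "((\<lambda>n. ln (real n) ^ l / real n) \<longlongrightarrow> 0) sequentially"
    by (rule filterlim_compose[OF ra4 filterlim_real_sequentially])
  then have "\<forall>\<^sub>F n in sequentially. ln (real n) ^ l / real n < 1"
    by (rule order_tendstoD) simp
  then show ?thesis using eventually_ge_at_top[of "1::nat"]
  proof eventually_elim
    case (elim n)
    then have n1: "real n \<ge> 1" by simp
    have lnn: "ln (real n) \<ge> 0" using n1 by simp
    have "real n powr (- real_of_int m) \<le> real n powr (- real_of_int A - 1)"
      using assms n1 by (intro powr_mono) auto
    also have "\<dots> = real n powr (- real_of_int A) / real n"
      using n1 by (simp add: powr_diff)
    finally have pm: "real n powr (- real_of_int m) \<le> real n powr (- real_of_int A) / real n" .
    have "\<bar>ln (real n) ^ l * real n powr (- real_of_int m)\<bar> = ln (real n) ^ l * real n powr (- real_of_int m)"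
      using lnn by simp
    also have "\<dots> \<le> ln (real n) ^ l * (real n powr (- real_of_int A) / real n)"
      using pm lnn by (intro mult_left_mono) auto
    also have "\<dots> = (ln (real n) ^ l / real n) * real n powr (- real_of_int A)" by simp
    also have "\<dots> \<le> 1 * real n powr (- real_of_int A)"
      using elim by (intro mult_right_mono) auto
    finally show ?case by simp
  qed
qed

lemma ourU_bigo:
  assumes "cmod z = 1" "z \<noteq> 1"
  shows "(\<lambda>n. taylor_coeff (Li_star z n) (of_int a) k -
       (\<Sum>(l, m)\<in>{(l, m). ourU z a A k l m \<noteq> (\<lambda>_. 0)}.
          ourU z a A k l m n * of_real (ln (real n) ^ l * real n powr (- real_of_int m))))
     \<in> O(\<lambda>n. of_real (real n powr (- real_of_int A)))"
proof -
  define R where "R = RA a A"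
  define T where "T p n = z ^ n * cf0 z a k (fst p) (snd p) * of_real (ln (real n) ^ fst p * real n powr (- real_of_int (snd p)))" for p n
  define supp where "supp = {(l, m). ourU z a A k l m \<noteq> (\<lambda>_. 0)}"
  have supp_sub: "supp \<subseteq> boxk a A k"
    by (auto simp: supp_def ourU_def)
  have Ssum: "(\<Sum>(l, m)\<in>supp. ourU z a A k l m n * of_real (ln (real n) ^ l * real n powr (- real_of_int m)))
      = (\<Sum>p\<in>boxk a A k. if snd p \<le> A then T p n else 0)" for n
  proof -
    have "(\<Sum>(l, m)\<in>supp. ourU z a A k l m n * of_real (ln (real n) ^ l * real n powr (- real_of_int m)))
        = (\<Sum>(l, m)\<in>boxk a A k. ourU z a A k l m n * of_real (ln (real n) ^ l * real n powr (- real_of_int m)))"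
    proof (rule sum.mono_neutral_left[OF boxk_finite supp_sub])
      show "\<forall>p\<in>boxk a A k - supp. (case p of (l, m) \<Rightarrow> ourU z a A k l m n * of_real (ln (real n) ^ l * real n powr (- real_of_int m))) = 0"
        by (auto simp: supp_def)
    qed
    also have "\<dots> = (\<Sum>p\<in>boxk a A k. if snd p \<le> A then T p n else 0)"
      by (intro sum.cong refl) (auto simp: ourU_def T_def)
    finally show ?thesis .
  qed
  have hbox: "(deriv ^^ k) (hh z R n) (of_int a) / fact k = (\<Sum>p\<in>boxk a A k. T p n)" if "n > 0" for n
    unfolding R_def T_def using taylor_hh_box[OF that, of k z a A] by (simp add: case_prod_beta')
  define G where "G n = (deriv ^^ k) (En z R n) (of_int a) / fact k + (\<Sum>p\<in>boxk a A k. if snd p \<le> A then 0 else T p n)" for n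
  have ev: "\<forall>\<^sub>F n in sequentially. G n = taylor_coeff (Li_star z n) (of_int a) k -
       (\<Sum>(l, m)\<in>{(l, m). ourU z a A k l m \<noteq> (\<lambda>_. 0)}.
          ourU z a A k l m n * of_real (ln (real n) ^ l * real n powr (- real_of_int m)))"
    using eventually_gt_at_top[of "0::nat"]
  proof eventually_elim
    case (elim n)
    have "taylor_coeff (Li_star z n) (of_int a) k -
       (\<Sum>(l, m)\<in>{(l, m). ourU z a A k l m \<noteq> (\<lambda>_. 0)}.
          ourU z a A k l m n * of_real (ln (real n) ^ l * real n powr (- real_of_int m)))
      = (\<Sum>p\<in>boxk a A k. T p n) + (deriv ^^ k) (En z R n) (of_int a) / fact k - (\<Sum>p\<in>boxk a A k. if snd p \<le> A then T p n else 0)"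
      unfolding F_decomp[OF assms, of n a k A] Ssum[unfolded supp_def] hbox[OF elim, symmetric] R_def by simp
    also have "\<dots> = G n"
    proof -
      have split: "(\<Sum>p\<in>boxk a A k. T p n) = (\<Sum>p\<in>boxk a A k. if snd p \<le> A then 0 else T p n)
          + (\<Sum>p\<in>boxk a A k. if snd p \<le> A then T p n else 0)"
        unfolding sum.distrib[symmetric] by (intro sum.cong) auto
      show ?thesis unfolding G_def split by (simp add: algebra_simps)
    qed
    finally show ?case by simp
  qed
  have GO: "G \<in> O(\<lambda>n. of_real (real n powr (- real_of_int A)))"
    unfolding G_def[abs_def]
  proof (rule sum_in_bigo(1))
    obtain K n1 where K: "\<forall>n\<ge>n1. cmod ((deriv ^^ k) (En z R n) (of_int a)) \<le> K * real n powr (- real_of_int (max A 0))"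
      using taylor_En_bound[OF assms, of k a A] unfolding R_def by blast
    show "(\<lambda>n. (deriv ^^ k) (En z R n) (of_int a) / fact k) \<in> O(\<lambda>n. complex_of_real (real n powr - real_of_int A))"
    proof (rule bigoI)
      show "\<forall>\<^sub>F n in sequentially. norm ((deriv ^^ k) (En z R n) (of_int a) / fact k) \<le> (max K 0 / fact k) * norm (complex_of_real (real n powr - real_of_int A))"
        using eventually_ge_at_top[of "max n1 1"]
      proof eventually_elim
        case (elim n)
        have "norm ((deriv ^^ k) (En z R n) (of_int a) / fact k) = cmod ((deriv ^^ k) (En z R n) (of_int a)) / fact k"
          by (simp add: norm_divide)
        also have "\<dots> \<le> K * real n powr (- real_of_int (max A 0)) / fact k"
          using K elim by (intro divide_right_mono) auto
        also have "\<dots> \<le> max K 0 * real n powr (- real_of_int (max A 0)) / fact k"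
          by (intro divide_right_mono mult_right_mono) auto
        also have "\<dots> \<le> max K 0 * real n powr (- real_of_int A) / fact k"
          using elim by (intro divide_right_mono mult_left_mono powr_mono) auto
        finally show ?case by (simp add: abs_of_nonneg)
      qed
    qed
    show "(\<lambda>n. \<Sum>p\<in>boxk a A k. if snd p \<le> A then 0 else T p n) \<in> O(\<lambda>n. complex_of_real (real n powr - real_of_int A))"
    proof (rule big_sum_in_bigo)
      fix p assume "p \<in> boxk a A k"
      show "(\<lambda>n. if snd p \<le> A then 0 else T p n) \<in> O(\<lambda>n. complex_of_real (real n powr - real_of_int A))"
      proof (cases "snd p \<le> A")
        case True then show ?thesis by simp
      next
        case False
        then have mA: "A < snd p" by simp
        have "(\<lambda>n. T p n) \<in> O(\<lambda>n. complex_of_real (real n powr - real_of_int A))"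
        proof (rule bigoI)
          show "\<forall>\<^sub>F n in sequentially. norm (T p n) \<le> cmod (cf0 z a k (fst p) (snd p)) * norm (complex_of_real (real n powr - real_of_int A))"
            using LN_bound[OF mA, of "fst p"]
          proof eventually_elim
            case (elim n)
            have "norm (T p n) = cmod (cf0 z a k (fst p) (snd p)) * \<bar>ln (real n) ^ fst p * real n powr (- real_of_int (snd p))\<bar>"
              by (simp only: T_def norm_mult norm_power norm_of_real assms(1) power_one mult_1)
            also have "\<dots> \<le> cmod (cf0 z a k (fst p) (snd p)) * real n powr (- real_of_int A)"
              using elim by (intro mult_left_mono) auto
            finally show ?case by simp
          qed
        qed
        then show ?thesis using False by simp
      qed
    qed
  qed
  show ?thesis using GO landau_o.big.in_cong[OF ev] by simp
qed


lemma ourU_prec: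
  assumes d: "d > 0" "z ^ d = 1" and z1: "cmod z = 1" and zn: "z \<noteq> 1"
  shows "asymp_exp_prec [z] (of_int a) (\<lambda>N k. taylor_coeff (Li_star z N) (of_int a) k) A (ourU z a A)"
  unfolding asymp_exp_prec_def
  apply (intro conjI allI impI)
  subgoal for k l m unfolding ourU_def by (rule seq_alg_zpow[OF d])
  subgoal for k l m by (auto simp: ourU_def)
  subgoal for k
  proof -
    have "{(l, m). ourU z a A k l m \<noteq> (\<lambda>_. 0)} \<subseteq> boxk a A k" by (auto simp: ourU_def)
    then show ?thesis using boxk_finite finite_subset by blast
  qed
  subgoal for k using ourU_bigo[OF z1 zn, of a k A] by simp
  subgoal by (rule exI[of _ "a - 1"]) (auto simp: ourU_def boxk_def)
  subgoal for l m unfolding ourU_def const_coord_zpow[OF d zn] by (auto intro!: exI[of _ 1])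
  done

theorem proposition2:
  fixes a :: int and z :: complex
  assumes "\<exists>d>0. z ^ d = 1" and "z \<noteq> 1"
  shows "has_complete_asymp_exp [z] (of_int a)
           (\<lambda>N k. taylor_coeff (Li_star z N) (of_int a) k) \<and>
         (THE G. formal_complete_exp [z] (of_int a)
           (\<lambda>N k. taylor_coeff (Li_star z N) (of_int a) k) G) = (\<lambda>l m k. 0)"
proof -
  obtain d where d: "d > 0" "z ^ d = 1" using assms(1) by blast
  have z1: "cmod z = 1"
  proof -
    have "cmod z ^ d = 1 ^ d" using d(2) by (metis norm_power norm_one power_one)
    then show ?thesis by (rule power_eq_imp_eq_base[OF _ _ _ d(1)]) auto
  qed
  define F where "F = (\<lambda>N k. taylor_coeff (Li_star z N) (of_int a) k)"
  have prec: "asymp_exp_prec [z] (of_int a) F A (ourU z a A)" for A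
    unfolding F_def by (rule ourU_prec[OF d z1 assms(2)])
  have cc0: "const_coord [z] (ourU z a A k l m) = 0" for A k l m
    unfolding ourU_def by (rule const_coord_zpow[OF d assms(2)])
  have complete: "has_complete_asymp_exp [z] (of_int a) F"
    unfolding has_complete_asymp_exp_def using prec by blast
  have fG0: "formal_complete_exp [z] (of_int a) F (\<lambda>l m k. 0)"
    unfolding formal_complete_exp_def
  proof (intro conjI allI)
    show "\<exists>m0. \<forall>l m. m \<le> m0 \<longrightarrow> (\<lambda>k. 0) = (\<lambda>_. 0)" by simp
    fix A
    show "\<exists>u. asymp_exp_prec [z] (of_int a) F A u \<and> (\<forall>l m. m \<le> A \<longrightarrow> (\<lambda>k. 0) = (\<lambda>k. const_coord [z] (u k l m)))"
      by (rule exI[of _ "ourU z a A"]) (simp add: prec cc0)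
  qed
  have uniq: "G = (\<lambda>l m k. 0)" if fG: "formal_complete_exp [z] (of_int a) F G" for G
  proof (intro ext)
    fix l :: nat and m :: int and k :: nat
    define A where "A = m + 1"
    obtain u where pu: "asymp_exp_prec [z] (of_int a) F A u"
      and Gu: "\<forall>l' m'. m' \<le> A \<longrightarrow> G l' m' = (\<lambda>k. const_coord [z] (u k l' m'))"
      using fG unfolding formal_complete_exp_def by blast
    have Glm: "G l m k = const_coord [z] (u k l m)" using Gu by (simp add: A_def)
    have u_alg: "\<And>k l m. u k l m \<in> seq_alg [z]" and u_fin: "finite {(l, m). u k l m \<noteq> (\<lambda>_. 0)}"
      and u_O: "(\<lambda>n. F n k - (\<Sum>(l, m)\<in>{(l, m). u k l m \<noteq> (\<lambda>_. 0)}.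
              u k l m n * of_real (ln (real n) ^ l * real n powr (- real_of_int m))))
          \<in> O(\<lambda>n. of_real (real n powr (- real_of_int A)))"
      using pu unfolding asymp_exp_prec_def by blast+
    have o_alg: "\<And>k l m. ourU z a A k l m \<in> seq_alg [z]" and o_fin: "finite {(l, m). ourU z a A k l m \<noteq> (\<lambda>_. 0)}"
      and o_O: "(\<lambda>n. F n k - (\<Sum>(l, m)\<in>{(l, m). ourU z a A k l m \<noteq> (\<lambda>_. 0)}.
              ourU z a A k l m n * of_real (ln (real n) ^ l * real n powr (- real_of_int m))))
          \<in> O(\<lambda>n. of_real (real n powr (- real_of_int A)))"
      using prec[of A] unfolding asymp_exp_prec_def by blast+
    define Su where "Su = {(l, m). u k l m \<noteq> (\<lambda>_. 0)}"
    define So where "So = {(l, m). ourU z a A k l m \<noteq> (\<lambda>_. 0)}"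
    define S where "S = Su \<union> So"
    have finS: "finite S" using u_fin o_fin by (simp add: S_def Su_def So_def)
    define X where "X p n = (of_real (ln (real n) ^ fst p * real n powr (- real_of_int (snd p))) :: complex)" for p :: "nat \<times> int" and n :: nat
    define v where "v p n = ourU z a A k (fst p) (snd p) n - u k (fst p) (snd p) n" for p n
    have ext_o: "(\<Sum>p\<in>S. ourU z a A k (fst p) (snd p) n * X p n) = (\<Sum>(l, m)\<in>So. ourU z a A k l m n * of_real (ln (real n) ^ l * real n powr (- real_of_int m)))" for n
    proof -
      have "(\<Sum>p\<in>S. ourU z a A k (fst p) (snd p) n * X p n) = (\<Sum>p\<in>So. ourU z a A k (fst p) (snd p) n * X p n)"
        by (rule sum.mono_neutral_right[OF finS]) (auto simp: S_def So_def)
      then show ?thesis by (simp add: X_def case_prod_beta')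
    qed
    have ext_u: "(\<Sum>p\<in>S. u k (fst p) (snd p) n * X p n) = (\<Sum>(l, m)\<in>Su. u k l m n * of_real (ln (real n) ^ l * real n powr (- real_of_int m)))" for n
    proof -
      have "(\<Sum>p\<in>S. u k (fst p) (snd p) n * X p n) = (\<Sum>p\<in>Su. u k (fst p) (snd p) n * X p n)"
        by (rule sum.mono_neutral_right[OF finS]) (auto simp: S_def Su_def)
      then show ?thesis by (simp add: X_def case_prod_beta')
    qed
    have vsum: "(\<Sum>p\<in>S. v p n * X p n) = 
        (F n k - (\<Sum>(l, m)\<in>Su. u k l m n * of_real (ln (real n) ^ l * real n powr (- real_of_int m))))
      - (F n k - (\<Sum>(l, m)\<in>So. ourU z a A k l m n * of_real (ln (real n) ^ l * real n powr (- real_of_int m))))" for n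
      unfolding ext_o[symmetric] ext_u[symmetric] v_def by (simp add: sum_subtractf[symmetric] algebra_simps)
    have vO: "(\<lambda>n. \<Sum>p\<in>S. v p n * of_real (ln (real n) ^ fst p * real n powr (- real_of_int (snd p))))
        \<in> O(\<lambda>n. of_real (real n powr (- real_of_int A)))"
      using sum_in_bigo(2)[OF u_O[folded Su_def] o_O[folded So_def]] vsum unfolding X_def by simp
    have per: "v p (n + d) = v p n" if "p \<in> S" "n \<ge> 1" for p n
      unfolding v_def using seq_alg_periodic[OF d(2) u_alg that(2)] seq_alg_periodic[OF d(2) o_alg that(2)] by simp
    have same: "u k l m n = ourU z a A k l m n" if n1: "n \<ge> 1" for n
    proof (cases "(l, m) \<in> S")
      case True
      have "v (l, m) n = 0"
      proof (rule expansion_unique[OF finS d(1) per vO True])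
        show "snd (l, m) < A" unfolding A_def by simp
      qed (use n1 in auto)
      then show ?thesis by (simp add: v_def)
    next
      case False
      then have "u k l m = (\<lambda>_. 0)" "ourU z a A k l m = (\<lambda>_. 0)" by (auto simp: S_def Su_def So_def)
      then show ?thesis by simp
    qed
    have "const_coord [z] (u k l m) = (\<Sum>n=1..d. u k l m n) / of_nat d"
      by (rule const_coord_avg[OF d u_alg])
    also have "\<dots> = (\<Sum>n=1..d. ourU z a A k l m n) / of_nat d"
      using same by (intro arg_cong2[where f = "(/)"] sum.cong refl) auto
    also have "\<dots> = const_coord [z] (ourU z a A k l m)"
      by (rule const_coord_avg[OF d o_alg, symmetric])
    also have "\<dots> = 0" by (rule cc0)
    finally show "G l m k = 0" using Glm by simp
  qed
  have "(THE G. formal_complete_exp [z] (of_int a) F G) = (\<lambda>l m k. 0)"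
  proof (rule the_equality)
    show "formal_complete_exp [z] (of_int a) F (\<lambda>l m k. 0)" by (rule fG0)
    show "\<And>G. formal_complete_exp [z] (of_int a) F G \<Longrightarrow> G = (\<lambda>l m k. 0)" by (rule uniq)
  qed
  then show ?thesis using complete unfolding F_def by simp
qed


end
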